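(* Let $a>c$ and $\mathbf V'\subset\mathbf V$. For any function $u:\mathbf V'\to\mathbb R$ there is at most one function $v:\mathbf V\to\mathbb R$ which solves $(DFE_a)$ at every $x\in\mathbf V\setminus\mathbf V'$ and agrees with $u$ on $\mathbf V'$.
   Context: Setting: network $\Gamma$ with arcs $\mathcal E$ (finite, closed under inversion, vertices $\mathbf V$, connected), Hamiltonians $H_\gamma$ as standard (continuous, coercive, quasiconvex in $p$ with $\mathrm{Int}\{H_\gamma(s,\cdot)\le b\}=\{H_\gamma(s,\cdot)<b\}$, $H_{\tilde\gamma}(s,p)=H_\gamma(1-s,-p)$), $a_0$ and $c$ as follows: $a_\gamma=\max_s\min_pH_\gamma$, $c_\gamma$ = least level with a periodic viscosity subsolution, $a_0=\max\{\max_{\gamma\text{ not closed}}a_\gamma,\max_{\gamma\text{ closed}}c_\gamma\}$, with $\min_pH_\gamma(s,p)$ constant in $s$ whenever $a_\gamma=a_0$. Abstract graph $\mathbf X=(\mathbf V,\mathbf E)$, $\Psi:\mathbf E\to\mathcal E$ bijection, $\mathrm o(e)=\Psi(e)(0)$, $\mathrm t(e)=\Psi(e)(1)$, $-e=\Psi^{-1}(\widetilde{\Psi(e)})$, $\mathbf E_x=\{e:\mathrm o(e)=x\}$, $\sigma_a(e)=\int_0^1\max\{p:H_{\Psi(e)}(t,p)=a\}\,dt$ for $a\ge a_0$. A function $v$ solves $(DFE_a)$ at $x$ if $v(x)=\min_{e\in\mathbf E_x}(v(\mathrm t(e))+\sigma_a(-e))$; it is a subsolution of $(DFE_a)$ if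 $v(\mathrm t(e))-v(\mathrm o(e))\le\sigma_a(e)$ for all $e$. $c=\min\{a\ge a_0:(DFE_a)$ admits a subsolution$\}$. *)

theory Defs
  imports "HOL-Analysis.Analysis"
begin

text \<open>Since Psi is a bijection between
  the abstract edges and the arcs, each Hamiltonian H_gamma is indexed by the
  corresponding abstract edge: H e s p = H_{Psi(e)}(s,p). Orientation reversal
  of arcs corresponds to neg e = -e; an arc is closed iff orig e = t e.\<close>

definition a_gamma :: "('e \<Rightarrow> real \<Rightarrow> real \<Rightarrow> real) \<Rightarrow> 'e \<Rightarrow> real" where
  "a_gamma H e = (SUP s\<in>{0..1}. INF p. H e s p)"

definition periodic_visc_subsol ::
  "('e \<Rightarrow> real \<Rightarrow> real \<Rightarrow> real) \<Rightarrow> 'e \<Rightarrow> real \<Rightarrow> (real \<Rightarrow> real) \<Rightarrow> bool" where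
  "periodic_visc_subsol H e b u \<longleftrightarrow>
     continuous_on {0..1} u \<and> u 0 = u 1 \<and>
     (\<forall>s\<in>{0<..<1}. \<forall>\<phi> \<phi>'.
        (\<forall>x. (\<phi> has_real_derivative \<phi>' x) (at x)) \<and> continuous_on UNIV \<phi>' \<and>
        \<phi> s = u s \<and> (\<exists>\<delta>>0. \<forall>x\<in>{0<..<1}. \<bar>x - s\<bar> < \<delta> \<longrightarrow> u x \<le> \<phi> x)
        \<longrightarrow> H e s (\<phi>' s) \<le> b)"

definition c_gamma :: "('e \<Rightarrow> real \<Rightarrow> real \<Rightarrow> real) \<Rightarrow> 'e \<Rightarrow> real" where
  "c_gamma H e = Inf {b. \<exists>u. periodic_visc_subsol H e b u}"

definition a0 :: "'e set \<Rightarrow> ('e \<Rightarrow> 'v) \<Rightarrow> ('e \<Rightarrow> 'v) \<Rightarrow> ('e \<Rightarrow> real \<Rightarrow> real \<Rightarrow> real) \<Rightarrow> real" where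
  "a0 E orig t H = Max (a_gamma H ` {e\<in>E. orig e \<noteq> t e} \<union> c_gamma H ` {e\<in>E. orig e = t e})"

definition sigma :: "('e \<Rightarrow> real \<Rightarrow> real \<Rightarrow> real) \<Rightarrow> real \<Rightarrow> 'e \<Rightarrow> real" where
  "sigma H a e = integral {0..1} (\<lambda>s. Sup {p. H e s p = a})"

definition dfe_subsol ::
  "'e set \<Rightarrow> ('e \<Rightarrow> 'v) \<Rightarrow> ('e \<Rightarrow> 'v) \<Rightarrow> ('e \<Rightarrow> real \<Rightarrow> real \<Rightarrow> real) \<Rightarrow> real \<Rightarrow> ('v \<Rightarrow> real) \<Rightarrow> bool" where
  "dfe_subsol E orig t H a v \<longleftrightarrow> (\<forall>e\<in>E. v (t e) - v (orig e) \<le> sigma H a e)"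

definition dfe_solves_at ::
  "'e set \<Rightarrow> ('e \<Rightarrow> 'v) \<Rightarrow> ('e \<Rightarrow> 'v) \<Rightarrow> ('e \<Rightarrow> 'e) \<Rightarrow> ('e \<Rightarrow> real \<Rightarrow> real \<Rightarrow> real)
     \<Rightarrow> real \<Rightarrow> ('v \<Rightarrow> real) \<Rightarrow> 'v \<Rightarrow> bool" where
  "dfe_solves_at E orig t neg H a v x \<longleftrightarrow>
     v x = Min ((\<lambda>e. v (t e) + sigma H a (neg e)) ` {e\<in>E. orig e = x})"

definition crit_value ::
  "'e set \<Rightarrow> ('e \<Rightarrow> 'v) \<Rightarrow> ('e \<Rightarrow> 'v) \<Rightarrow> ('e \<Rightarrow> real \<Rightarrow> real \<Rightarrow> real) \<Rightarrow> real" where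
  "crit_value E orig t H = Inf {a. a \<ge> a0 E orig t H \<and> (\<exists>v. dfe_subsol E orig t H a v)}"

definition network_setting ::
  "'v set \<Rightarrow> 'e set \<Rightarrow> ('e \<Rightarrow> 'v) \<Rightarrow> ('e \<Rightarrow> 'v) \<Rightarrow> ('e \<Rightarrow> 'e) \<Rightarrow> ('e \<Rightarrow> real \<Rightarrow> real \<Rightarrow> real) \<Rightarrow> bool" where
  "network_setting V E orig t neg H \<longleftrightarrow>
     finite V \<and> finite E \<and> E \<noteq> {} \<and>
     (\<forall>e\<in>E. orig e \<in> V \<and> t e \<in> V \<and> neg e \<in> E \<and> neg (neg e) = e \<and> neg e \<noteq> e \<and>
             orig (neg e) = t e) \<and>
     (\<forall>x\<in>V. \<forall>y\<in>V. (x, y) \<in> {(orig e, t e) | e. e \<in> E}\<^sup>*) \<and>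
     (\<forall>e\<in>E. continuous_on ({0..1} \<times> UNIV) (\<lambda>(s, p). H e s p)) \<and>
     (\<forall>e\<in>E. \<forall>M. \<exists>R. \<forall>s\<in>{0..1}. \<forall>p. \<bar>p\<bar> \<ge> R \<longrightarrow> H e s p \<ge> M) \<and>
     (\<forall>e\<in>E. \<forall>s\<in>{0..1}. \<forall>b. convex {p. H e s p \<le> b}) \<and>
     (\<forall>e\<in>E. \<forall>s\<in>{0..1}. \<forall>b. interior {p. H e s p \<le> b} = {p. H e s p < b}) \<and>
     (\<forall>e\<in>E. \<forall>s\<in>{0..1}. \<forall>p. H (neg e) s p = H e (1 - s) (- p)) \<and>
     (\<forall>e\<in>E. a_gamma H e = a0 E orig t H \<longrightarrow>
        (\<exists>m. \<forall>s\<in>{0..1}. (INF p. H e s p) = m))"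

end

theory Submission
  imports Defs "HOL-Analysis.Analysis"
begin


definition rr :: "(real \<Rightarrow> real \<Rightarrow> real) \<Rightarrow> real \<Rightarrow> real \<Rightarrow> real" where
  "rr h c s = Sup {p. h s p = c}"

locale ham =
  fixes h :: "real \<Rightarrow> real \<Rightarrow> real"
  assumes cont: "continuous_on ({0..1} \<times> UNIV) (\<lambda>(s, p). h s p)"
    and coer: "\<forall>M. \<exists>R. \<forall>s\<in>{0..1}. \<forall>p. \<bar>p\<bar> \<ge> R \<longrightarrow> h s p \<ge> M"
    and conv: "\<forall>s\<in>{0..1}. \<forall>b. convex {p. h s p \<le> b}"
    and intr: "\<forall>s\<in>{0..1}. \<forall>b. interior {p. h s p \<le> b} = {p. h s p < b}"
begin

lemma coerR: obtains R where "R > 0" "\<And>s p. s \<in> {0..1} \<Longrightarrow> \<bar>p\<bar> \<ge> R \<Longrightarrow> h s p \<ge> M"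
proof -
  obtain R where R: "\<forall>s\<in>{0..1}. \<forall>p. \<bar>p\<bar> \<ge> R \<longrightarrow> h s p \<ge> M" using coer by blast
  show ?thesis
    apply (rule that[of "\<bar>R\<bar> + 1"]) using R by auto
qed

lemma cont_p: "s \<in> {0..1} \<Longrightarrow> continuous_on UNIV (h s)"
proof -
  assume s: "s \<in> {0..1}"
  have "continuous_on UNIV ((\<lambda>(s, p). h s p) \<circ> (\<lambda>p. (s, p)))"
    apply (rule continuous_on_compose)
     apply (intro continuous_intros)
    apply (rule continuous_on_subset[OF cont]) using s by auto
  then show ?thesis by (simp add: o_def)
qed

lemma cont_s: "continuous_on {0..1} (\<lambda>s. h s p)"
proof -
  have "continuous_on {0..1} ((\<lambda>(s, p). h s p) \<circ> (\<lambda>s. (s, p)))"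
    apply (rule continuous_on_compose)
     apply (intro continuous_intros)
    apply (rule continuous_on_subset[OF cont]) by auto
  then show ?thesis by (simp add: o_def)
qed

lemma rr_props:
  assumes s: "s \<in> {0..1}" and ex: "\<exists>p. h s p \<le> c"
  shows "h s (rr h c s) = c" "\<And>p. h s p \<le> c \<Longrightarrow> p \<le> rr h c s"
proof -
  obtain R where R: "R > 0" "\<And>s p. s \<in> {0..1} \<Longrightarrow> \<bar>p\<bar> \<ge> R \<Longrightarrow> h s p \<ge> c + 1"
    using coerR by blast
  define S where "S = {p. h s p \<le> c}"
  have cl: "closed S" unfolding S_def
    using continuous_closed_preimage_constant cont_p[OF s]
    by (simp add: closed_Collect_le cont_p s continuous_on_const)
  have bd: "bdd_above S" unfolding bdd_above_def
  proof (intro exI[of _ R] ballI)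
    fix p assume p: "p \<in> S"
    show "p \<le> R"
    proof (rule ccontr)
      assume "\<not> p \<le> R"
      then have "\<bar>p\<bar> \<ge> R" by auto
      then have "h s p \<ge> c + 1" using R(2)[OF s] by blast
      then show False using p S_def by auto
    qed
  qed
  have ne: "S \<noteq> {}" using ex S_def by auto
  define m where "m = Sup S"
  have mS: "m \<in> S" unfolding m_def using cl bd ne closed_contains_Sup by blast
  have ub: "\<And>p. p \<in> S \<Longrightarrow> p \<le> m" unfolding m_def using bd by (simp add: cSup_upper)
  have hm: "h s m = c"
  proof (rule ccontr)
    assume "h s m \<noteq> c"
    then have "h s m < c" using mS S_def by auto
    then have "m \<in> interior S" using intr s S_def by auto
    then obtain e where e: "e > 0" "ball m e \<subseteq> S" by (meson openE open_interior interior_subset subset_trans)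
    have "m + e/2 \<in> ball m e" using e by (simp add: dist_real_def)
    then have "m + e/2 \<in> S" using e(2) by blast
    then show False using ub[of "m + e/2"] e by auto
  qed
  have eq: "rr h c s = m" unfolding rr_def
    apply (rule cSup_eq_maximum) using hm ub S_def by auto
  show "h s (rr h c s) = c" using eq hm by simp
  show "\<And>p. h s p \<le> c \<Longrightarrow> p \<le> rr h c s" using eq ub S_def by auto
qed


lemma rr_mono_strict:
  assumes s: "s \<in> {0..1}" and ex: "\<exists>p. h s p \<le> c" and cc: "c < c'"
  shows "rr h c s < rr h c' s"
proof -
  have ex': "\<exists>p. h s p \<le> c'" using ex cc by (meson order.trans less_imp_le)
  have "h s (rr h c s) < c'" using rr_props(1)[OF s ex] cc by simp
  then have "rr h c s \<in> interior {p. h s p \<le> c'}" using intr s by auto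
  then obtain e where e: "e > 0" "ball (rr h c s) e \<subseteq> {p. h s p \<le> c'}"
    by (meson openE open_interior interior_subset subset_trans)
  have "rr h c s + e/2 \<in> ball (rr h c s) e" using e by (simp add: dist_real_def)
  then have "h s (rr h c s + e/2) \<le> c'" using e(2) by blast
  then have "rr h c s + e/2 \<le> rr h c' s" using rr_props(2)[OF s ex'] by blast
  then show ?thesis using e by simp
qed

lemma closed_proj: "closed {s\<in>{0..1}. \<exists>p\<in>{y..z}. h s p \<le> c}"
proof -
  have cl: "closed {x \<in> {0..1} \<times> {y..z}. (\<lambda>(s, p). h s p) x \<le> (\<lambda>_. c) x}"
    apply (rule continuous_on_closed_Collect_le)
      apply (rule continuous_on_subset[OF cont]) apply blast
     apply (rule continuous_on_const)
    by (simp add: closed_Times)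
  have "compact {x \<in> {0..1} \<times> {y..z}. (\<lambda>(s, p). h s p) x \<le> (\<lambda>_. c) x}"
    unfolding compact_eq_bounded_closed apply (rule conjI[OF _ cl])
    apply (rule bounded_subset[of "{0..1} \<times> {y..z}"])
     apply (simp add: bounded_Times) by blast
  then have "compact (fst ` {x \<in> {0..1} \<times> {y..z}. (\<lambda>(s, p). h s p) x \<le> (\<lambda>_. c) x})"
    by (rule compact_continuous_image[OF continuous_on_fst[OF continuous_on_id]])
  moreover have "fst ` {x \<in> {0..1} \<times> {y..z}. (\<lambda>(s, p). h s p) x \<le> (\<lambda>_. c) x}
     = {s\<in>{0..1}. \<exists>p\<in>{y..z}. h s p \<le> c}"
    apply (rule equalityI)
     apply (auto simp: image_iff)[1]
    apply (clarsimp simp: image_iff) by (metis fst_conv atLeastAtMost_iff)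
  ultimately show ?thesis using compact_imp_closed by metis
qed


lemma closed_in_leb: "closed T \<Longrightarrow> T \<subseteq> {0..1::real} \<Longrightarrow> T \<in> sets (lebesgue_on {0..1})"
proof -
  assume T: "closed T" "T \<subseteq> {0..1::real}"
  have "T \<in> sets lebesgue" using T(1) lebesgue_closedin[of UNIV T] by simp
  then show ?thesis using T(2) by (simp add: sets_restrict_space_iff)
qed

lemma rr_ge_iff:
  assumes s: "s \<in> {0..1}" and ex: "\<exists>p. h s p \<le> c"
    and R: "\<And>s p. s \<in> {0..1} \<Longrightarrow> \<bar>p\<bar> \<ge> R \<Longrightarrow> h s p \<ge> c + 1"
  shows "rr h c s \<ge> y \<longleftrightarrow> (\<exists>p\<in>{y..R}. h s p \<le> c)"
proof
  assume y: "rr h c s \<ge> y"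
  have "h s (rr h c s) = c" using rr_props(1)[OF s ex] .
  then have "\<not> \<bar>rr h c s\<bar> \<ge> R" using R[OF s] by force
  then show "\<exists>p\<in>{y..R}. h s p \<le> c" using y \<open>h s (rr h c s) = c\<close>
    by (intro bexI[of _ "rr h c s"]) auto
next
  assume "\<exists>p\<in>{y..R}. h s p \<le> c"
  then obtain p where "p \<ge> y" "h s p \<le> c" by auto
  then show "rr h c s \<ge> y" using rr_props(2)[OF s ex] by force
qed

lemma rr_meas:
  assumes ex: "\<forall>s\<in>{0..1}. \<exists>p. h s p \<le> c"
  shows "rr h c \<in> borel_measurable (lebesgue_on {0..1})"
proof -
  obtain R where R: "R > 0" "\<And>s p. s \<in> {0..1} \<Longrightarrow> \<bar>p\<bar> \<ge> R \<Longrightarrow> h s p \<ge> c + 1"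
    using coerR by blast
  have eq: "{x \<in> {0..1}. rr h c x \<ge> y} = {s\<in>{0..1}. \<exists>p\<in>{y..R}. h s p \<le> c}" for y
    using rr_ge_iff[OF _ _ R(2)] ex by blast
  show ?thesis
    unfolding borel_measurable_vimage_halfspace_component_ge
  proof (intro allI impI)
    fix y :: real and i :: real assume "i \<in> Basis"
    then have i: "i = 1" by (simp add: Basis_real_def)
    have "{s\<in>{0..1}. \<exists>p\<in>{y..R}. h s p \<le> c} \<in> sets (lebesgue_on {0..1})"
      by (rule closed_in_leb[OF closed_proj]) blast
    then show "{x \<in> {0..1}. rr h c x \<bullet> i \<ge> y} \<in> sets (lebesgue_on {0..1})"
      using eq[of y] i by simp
  qed
qed

lemma rr_bound:
  assumes ex: "\<forall>s\<in>{0..1}. \<exists>p. h s p \<le> c"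
  shows "\<exists>B. \<forall>s\<in>{0..1}. \<bar>rr h c s\<bar> \<le> B"
proof -
  obtain R where R: "R > 0" "\<And>s p. s \<in> {0..1} \<Longrightarrow> \<bar>p\<bar> \<ge> R \<Longrightarrow> h s p \<ge> c + 1"
    using coerR by blast
  have "\<bar>rr h c s\<bar> \<le> R" if s: "s \<in> {0..1}" for s
  proof (rule ccontr)
    assume "\<not> \<bar>rr h c s\<bar> \<le> R"
    then have "h s (rr h c s) \<ge> c + 1" using R(2)[OF s] by auto
    then show False using rr_props(1)[OF s] ex s by auto
  qed
  then show ?thesis by blast
qed

lemma rr_int:
  assumes ex: "\<forall>s\<in>{0..1}. \<exists>p. h s p \<le> c"
  shows "rr h c integrable_on {0..1}"
proof -
  obtain B where B: "\<forall>s\<in>{0..1}. \<bar>rr h c s\<bar> \<le> B" using rr_bound[OF ex] by blast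
  show ?thesis
    apply (rule measurable_bounded_by_integrable_imp_integrable_real[OF rr_meas[OF ex], of "\<lambda>_. B"])
    using B by auto
qed


lemma rr_cont:
  assumes ex: "\<forall>s\<in>{0..1}. \<exists>p. h s p < c"
  shows "continuous_on {0..1} (rr h c)"
  unfolding continuous_on_iff
proof (intro ballI allI impI)
  fix s0 :: real and e :: real assume s0: "s0 \<in> {0..1}" and e: "e > 0"
  have ex': "\<forall>s\<in>{0..1}. \<exists>p. h s p \<le> c" using ex by (meson less_imp_le)
  define r0 where "r0 = rr h c s0"
  have hr0: "h s0 r0 = c" using rr_props(1)[OF s0] ex' s0 r0_def by blast
  obtain R where R: "R > 0" "\<And>s p. s \<in> {0..1} \<Longrightarrow> \<bar>p\<bar> \<ge> R \<Longrightarrow> h s p \<ge> c + 1"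
    using coerR by blast
  define C where "C = {s\<in>{0..1}. \<exists>p\<in>{r0+e..R}. h s p \<le> c}"
  have clC: "closed C" unfolding C_def by (rule closed_proj)
  have s0C: "s0 \<notin> C"
  proof
    assume "s0 \<in> C"
    then obtain p where "p \<ge> r0 + e" "h s0 p \<le> c" unfolding C_def by auto
    then show False using rr_props(2)[OF s0] ex' s0 r0_def e by force
  qed
  obtain d1 where d1: "d1 > 0" "\<And>s. dist s s0 < d1 \<Longrightarrow> s \<notin> C"
    using clC s0C unfolding closed_def open_dist by (metis ComplI ComplD dist_commute)
  have up: "rr h c s < r0 + e" if "s \<in> {0..1}" "dist s s0 < d1" for s
  proof (rule ccontr)
    assume "\<not> rr h c s < r0 + e"
    moreover have exs: "\<exists>p. h s p \<le> c" using ex' that(1) by blast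
    ultimately have "\<exists>p\<in>{r0+e..R}. h s p \<le> c" using rr_ge_iff[of s c R "r0+e"] that(1) exs R(2) by simp
    then have "s \<in> C" unfolding C_def using that(1) by blast
    then show False using d1 that by blast
  qed
  obtain q where q: "h s0 q < c" using ex s0 by blast
  have "q \<le> r0" using rr_props(2)[OF s0] ex' s0 q r0_def by force
  moreover have "q \<noteq> r0" using q hr0 by auto
  ultimately have qr: "q < r0" by simp
  define p where "p = max q (r0 - e/2)"
  have hp: "h s0 p < c"
  proof (cases "p = q")
    case True then show ?thesis using q by simp
  next
    case False
    then have pq: "q < p" "p < r0" unfolding p_def using e qr by auto
    have iv: "is_interval {x. h s0 x \<le> c}" using conv s0 is_interval_convex_1 by blast
    have "{q<..<r0} \<subseteq> {x. h s0 x \<le> c}"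
    proof
      fix x assume "x \<in> {q<..<r0}"
      then show "x \<in> {x. h s0 x \<le> c}" using iv[unfolded is_interval_1, rule_format, of q r0 x] q hr0 by auto
    qed
    then have "{q<..<r0} \<subseteq> interior {x. h s0 x \<le> c}" by (simp add: interior_maximal)
    then have "p \<in> interior {x. h s0 x \<le> c}" using pq by auto
    then show ?thesis using intr s0 by auto
  qed
  obtain d2 where d2: "d2 > 0" "\<And>s. s \<in> {0..1} \<Longrightarrow> dist s s0 < d2 \<Longrightarrow> dist (h s p) (h s0 p) < c - h s0 p"
    using cont_s[of p] s0 hp unfolding continuous_on_iff by (metis diff_gt_0_iff_gt)
  have lo: "rr h c s > r0 - e" if "s \<in> {0..1}" "dist s s0 < d2" for s
  proof -
    have "h s p < c" using d2(2)[OF that] by (auto simp: dist_real_def)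
    then have "p \<le> rr h c s" using rr_props(2)[OF that(1)] ex' that(1) by force
    then show ?thesis unfolding p_def using e by linarith
  qed
  show "\<exists>d>0. \<forall>s\<in>{0..1}. dist s s0 < d \<longrightarrow> dist (rr h c s) (rr h c s0) < e"
  proof (intro exI[of _ "min d1 d2"] conjI ballI impI)
    show "min d1 d2 > 0" using d1 d2 by simp
    fix s assume s: "s \<in> {0..1}" "dist s s0 < min d1 d2"
    then have "rr h c s < r0 + e" "r0 - e < rr h c s" using up lo by auto
    then show "dist (rr h c s) (rr h c s0) < e" unfolding r0_def dist_real_def by linarith
  qed
qed

lemma integral_gap:
  assumes ex: "\<forall>s\<in>{0..1}. \<exists>p. h s p \<le> c" and cc: "c < c'"
  shows "integral {0..1} (rr h c) < integral {0..1} (rr h c')"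
proof -
  define c2 where "c2 = (c + c') / 2"
  have c2: "c < c2" "c2 < c'" using cc c2_def by auto
  have ex2: "\<forall>s\<in>{0..1}. \<exists>p. h s p < c2" using ex rr_props(1) c2 by (metis)
  have ex2': "\<forall>s\<in>{0..1}. \<exists>p. h s p \<le> c2" using ex2 by (meson less_imp_le)
  have ex3: "\<forall>s\<in>{0..1}. \<exists>p. h s p < c'" using ex2 c2 by (meson less_trans)
  have cf: "continuous_on {0..1} (\<lambda>s. rr h c' s - rr h c2 s)"
    by (intro continuous_intros rr_cont ex2 ex3)
  obtain sm where sm: "sm \<in> {0..1}" "\<And>s. s \<in> {0..1} \<Longrightarrow> rr h c' sm - rr h c2 sm \<le> rr h c' s - rr h c2 s"
    using continuous_attains_inf[OF compact_Icc _ cf] by force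
  define m where "m = rr h c' sm - rr h c2 sm"
  have m: "m > 0" unfolding m_def using rr_mono_strict[OF sm(1) _ c2(2)] ex2' sm(1) by auto
  have ex3': "\<forall>s\<in>{0..1}. \<exists>p. h s p \<le> c'" using ex3 by (meson less_imp_le)
  have I1: "rr h c integrable_on {0..1}" by (rule rr_int[OF ex])
  have I2: "rr h c2 integrable_on {0..1}" by (rule rr_int[OF ex2'])
  have I3: "rr h c' integrable_on {0..1}" by (rule rr_int[OF ex3'])
  have i1: "integral {0..1} (\<lambda>_::real. m) \<le> integral {0..1} (\<lambda>s. rr h c' s - rr h c2 s)"
    apply (rule Henstock_Kurzweil_Integration.integral_le[of "\<lambda>_. m" "{0..1}" "\<lambda>s. rr h c' s - rr h c2 s"])
      apply (rule integrable_const_ivl)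
     apply (rule integrable_diff[OF I3 I2])
    using sm(2) m_def by simp
  have i2: "integral {0..1} (rr h c) \<le> integral {0..1} (rr h c2)"
    apply (rule Henstock_Kurzweil_Integration.integral_le[OF I1 I2])
    using rr_mono_strict ex c2 by (meson less_imp_le)
  have "integral {0..1} (\<lambda>s. rr h c' s - rr h c2 s) = integral {0..1} (rr h c') - integral {0..1} (rr h c2)"
    by (rule integral_diff[OF I3 I2])
  moreover have "integral {0..1} (\<lambda>_::real. m) = m" by simp
  ultimately show ?thesis using i1 i2 m by linarith
qed

end



context ham begin

lemma inf_attained:
  assumes s: "s \<in> {0..1}"
  shows "\<exists>p0. \<forall>p. h s p0 \<le> h s p"
proof -
  obtain R where R: "R > 0" "\<And>t q. t \<in> {0..1} \<Longrightarrow> \<bar>q\<bar> \<ge> R \<Longrightarrow> h t q \<ge> h s 0 + 1"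
    using coerR[of "h s 0 + 1"] by blast
  have "continuous_on {-R..R} (h s)" using cont_p[OF s] continuous_on_subset by blast
  then obtain p0 where p0: "p0 \<in> {-R..R}" "\<And>p. p \<in> {-R..R} \<Longrightarrow> h s p0 \<le> h s p"
    using continuous_attains_inf[OF compact_Icc _ \<open>continuous_on {-R..R} (h s)\<close>] R(1) by auto
  have "h s p0 \<le> h s 0" using p0(2)[of 0] R(1) by simp
  have "h s p0 \<le> h s p" for p
  proof (cases "p \<in> {-R..R}")
    case True then show ?thesis using p0 by blast
  next
    case False
    then have "\<bar>p\<bar> \<ge> R" by auto
    then show ?thesis using R(2)[OF s] \<open>h s p0 \<le> h s 0\<close> by force
  qed
  then show ?thesis by blast
qed

lemma inf_eq:
  assumes s: "s \<in> {0..1}" and p0: "\<forall>p. h s p0 \<le> h s p"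
  shows "(INF p. h s p) = h s p0"
  by (rule cInf_eq_minimum) (use p0 in auto)

lemma ag_ok:
  assumes s: "s \<in> {0..1}"
  shows "\<exists>p. h s p \<le> (SUP s\<in>{0..1}. INF p. h s p)"
proof -
  obtain p0 where p0: "\<forall>p. h s p0 \<le> h s p" using inf_attained[OF s] by blast
  obtain sM where sM: "sM \<in> {0..1}" "\<And>s. s \<in> {0..1} \<Longrightarrow> h s 0 \<le> h sM 0"
    using continuous_attains_sup[OF compact_Icc _ cont_s[of 0]] by force
  have "bdd_above ((\<lambda>s. INF p. h s p) ` {0..1})"
    unfolding bdd_above_def
  proof (intro exI[of _ "h sM 0"] ballI)
    fix y assume "y \<in> (\<lambda>s. INF p. h s p) ` {0..1}"
    then obtain s' where s': "s' \<in> {0..1}" "y = (INF p. h s' p)" by auto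
    obtain q where "\<forall>p. h s' q \<le> h s' p" using inf_attained[OF s'(1)] by blast
    then have "y = h s' q" using inf_eq[OF s'(1)] s'(2) by simp
    also have "\<dots> \<le> h s' 0" using \<open>\<forall>p. h s' q \<le> h s' p\<close> by simp
    also have "\<dots> \<le> h sM 0" using sM(2)[OF s'(1)] .
    finally show "y \<le> h sM 0" .
  qed
  then have "(INF p. h s p) \<le> (SUP s\<in>{0..1}. INF p. h s p)"
    using s by (rule cSUP_upper[rotated])
  then show ?thesis using inf_eq[OF s p0] by auto
qed


lemma visc:
  assumes u: "continuous_on {0..1} u"
    and sub: "\<And>s \<phi> \<phi>'. s \<in> {0<..<1} \<Longrightarrow> (\<forall>x. (\<phi> has_real_derivative \<phi>' x) (at x)) \<Longrightarrow>
       continuous_on UNIV \<phi>' \<Longrightarrow> \<phi> s = u s \<Longrightarrow> (\<exists>\<delta>>0. \<forall>x\<in>{0<..<1}. \<bar>x - s\<bar> < \<delta> \<longrightarrow> u x \<le> \<phi> x)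
       \<Longrightarrow> h s (\<phi>' s) \<le> b"
    and s0: "s0 \<in> {0..1}"
  shows "\<exists>p. h s0 p \<le> b"
proof (rule ccontr)
  assume "\<not> (\<exists>p. h s0 p \<le> b)"
  then have "\<forall>p. b < h s0 p" by (simp add: not_le)
  then have all: "\<And>p. h s0 p > b" by blast
  obtain R where R: "R > 0" "\<And>t q. t \<in> {0..1} \<Longrightarrow> \<bar>q\<bar> \<ge> R \<Longrightarrow> h t q \<ge> b + 1"
    using coerR[of "b + 1"] by blast
  define C where "C = {s\<in>{0..1}. \<exists>p\<in>{-R..R}. h s p \<le> b}"
  have clC: "closed C" unfolding C_def by (rule closed_proj)
  have s0C: "s0 \<notin> C"
  proof
    assume "s0 \<in> C"
    then obtain p where "h s0 p \<le> b" unfolding C_def by blast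
    then show False using all[of p] by simp
  qed
  obtain d where d: "d > 0" "\<And>s. dist s s0 < d \<Longrightarrow> s \<notin> C"
    using clC s0C unfolding closed_def open_dist by (metis ComplI ComplD dist_commute)
  have far: "h t q > b" if "t \<in> {0..1}" "dist t s0 < d" for t q
  proof (cases "\<bar>q\<bar> \<ge> R")
    case True then show ?thesis using R(2)[OF that(1)] by force
  next
    case False
    then have "q \<in> {-R..R}" by auto
    moreover have "t \<notin> C" using d(2) that(2) by blast
    ultimately show ?thesis unfolding C_def using that(1) by force
  qed
  define d' where "d' = min d (1/2)"
  have d': "d' > 0" "d' \<le> d" "d' \<le> 1/2" using d unfolding d'_def by auto
  define m0 where "m0 = (if s0 \<le> 1/2 then s0 + d'/2 else s0 - d'/2)"
  define \<rho> where "\<rho> = d' / 4"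
  have rho: "\<rho> > 0" using d' \<rho>_def by simp
  have I0: "0 < m0 - \<rho>" "m0 + \<rho> < 1" using d' s0 unfolding m0_def \<rho>_def by auto
  have Id: "dist x s0 < d" if "x \<in> {m0-\<rho>..m0+\<rho>}" for x
    using that d' unfolding m0_def \<rho>_def dist_real_def by (auto split: if_splits)
  define I where "I = {m0-\<rho>..m0+\<rho>}"
  have I01: "I \<subseteq> {0..1}" using I0 unfolding I_def by auto
  have uI: "continuous_on I u" using continuous_on_subset[OF u I01] .
  have uaI: "continuous_on I (\<lambda>x. \<bar>u x\<bar>)" by (intro continuous_intros uI)
  obtain xb where xb: "xb \<in> I" "\<And>x. x \<in> I \<Longrightarrow> \<bar>u x\<bar> \<le> \<bar>u xb\<bar>"
    using continuous_attains_sup[OF _ _ uaI] rho unfolding I_def by force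
  define Bu where "Bu = \<bar>u xb\<bar>"
  have Bu: "\<And>x. x \<in> I \<Longrightarrow> \<bar>u x\<bar> \<le> Bu" "Bu \<ge> 0" using xb Bu_def by auto
  define K where "K = (2 * Bu + 1) / \<rho>^2"
  have Kr: "K * \<rho>^2 = 2 * Bu + 1" unfolding K_def using rho by simp
  have K0: "K > 0" unfolding K_def using rho Bu by simp
  define g where "g x = u x - K * (x - m0)^2" for x
  have gc: "continuous_on I g" unfolding g_def by (intro continuous_intros uI)
  obtain xs where xs: "xs \<in> I" "\<And>x. x \<in> I \<Longrightarrow> g x \<le> g xs"
    using continuous_attains_sup[OF _ _ gc] rho unfolding I_def by force
  have m0I: "m0 \<in> I" unfolding I_def using rho by auto
  have gm0: "g m0 \<ge> - Bu" unfolding g_def using Bu(1)[OF m0I] by simp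
  have gend: "g x < - Bu" if "x = m0 - \<rho> \<or> x = m0 + \<rho>" for x
  proof -
    have "(x - m0)^2 = \<rho>^2" using that by (auto simp: power2_eq_square)
    moreover have "x \<in> I" unfolding I_def using that rho by auto
    ultimately show ?thesis unfolding g_def using Kr Bu(1) by (smt (verit))
  qed
  have xs_int: "m0 - \<rho> < xs" "xs < m0 + \<rho>"
    using xs gm0 gend xs(2)[OF m0I] unfolding I_def
    by (smt (verit) atLeastAtMost_iff)+
  define \<phi> where "\<phi> x = g xs + K * (x - m0)^2" for x
  define \<phi>' where "\<phi>' x = 2 * K * (x - m0)" for x
  have der: "\<forall>x. (\<phi> has_real_derivative \<phi>' x) (at x)"
    unfolding \<phi>_def \<phi>'_def by (auto intro!: derivative_eq_intros)
  have contd: "continuous_on UNIV \<phi>'" unfolding \<phi>'_def by (intro continuous_intros)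
  have xs01: "xs \<in> {0<..<1}" using xs_int I0 by auto
  have phis: "\<phi> xs = u xs" unfolding \<phi>_def g_def by simp
  have loc: "\<exists>\<delta>>0. \<forall>x\<in>{0<..<1}. \<bar>x - xs\<bar> < \<delta> \<longrightarrow> u x \<le> \<phi> x"
  proof (intro exI[of _ "min (xs - (m0 - \<rho>)) (m0 + \<rho> - xs)"] conjI ballI impI)
    show "min (xs - (m0 - \<rho>)) (m0 + \<rho> - xs) > 0" using xs_int by simp
    fix x assume "\<bar>x - xs\<bar> < min (xs - (m0 - \<rho>)) (m0 + \<rho> - xs)"
    then have "x \<in> I" unfolding I_def by auto
    then have "g x \<le> g xs" using xs(2) by blast
    then show "u x \<le> \<phi> x" unfolding g_def \<phi>_def by simp
  qed
  have "h xs (\<phi>' xs) \<le> b" by (rule sub[OF xs01 der contd phis loc])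
  moreover have "h xs (\<phi>' xs) > b"
    apply (rule far) using xs01 apply simp
    using Id xs(1) unfolding I_def by blast
  ultimately show False by simp
qed

lemma const_subsol:
  assumes b0: "\<forall>s\<in>{0..1}. h s 0 \<le> b0"
    and s: "s \<in> {0<..<1}" and der: "\<forall>x. (\<phi> has_real_derivative \<phi>' x) (at x)"
    and phis: "\<phi> s = (0::real)" and loc: "\<exists>\<delta>>0. \<forall>x\<in>{0<..<1}. \<bar>x - s\<bar> < \<delta> \<longrightarrow> (0::real) \<le> \<phi> x"
  shows "h s (\<phi>' s) \<le> b0"
proof -
  obtain \<delta> where \<delta>: "\<delta> > 0" "\<forall>x\<in>{0<..<1}. \<bar>x - s\<bar> < \<delta> \<longrightarrow> 0 \<le> \<phi> x" using loc by blast
  define d where "d = min \<delta> (min s (1 - s))"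
  have d: "d > 0" using \<delta> s unfolding d_def by auto
  have "\<forall>y. \<bar>s - y\<bar> < d \<longrightarrow> \<phi> s \<le> \<phi> y"
  proof (intro allI impI)
    fix y assume "\<bar>s - y\<bar> < d"
    then have "y \<in> {0<..<1}" "\<bar>y - s\<bar> < \<delta>" unfolding d_def by auto
    then show "\<phi> s \<le> \<phi> y" using \<delta>(2) phis by auto
  qed
  then have "\<phi>' s = 0" using DERIV_local_min[OF der[rule_format, of s] d] by blast
  then show ?thesis using b0 s by auto
qed

end



lemma ns_ham: "network_setting V E orig t neg H \<Longrightarrow> e \<in> E \<Longrightarrow> ham (H e)"
  unfolding network_setting_def by unfold_locales auto

lemma sigma_rr: "sigma H a e = integral {0..1} (rr (H e) a)"
  by (simp add: sigma_def rr_def[abs_def])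

lemma cg_ok:
  assumes hm: "ham (H e)" and s: "s \<in> {0..1}"
  shows "\<exists>p. H e s p \<le> c_gamma H e"
proof -
  interpret ham "H e" by (rule hm)
  obtain p0 where p0: "\<forall>p. H e s p0 \<le> H e s p" using inf_attained[OF s] by blast
  define Bs where "Bs = {b. \<exists>u. periodic_visc_subsol H e b u}"
  obtain sM where sM: "sM \<in> {0..1}" "\<And>s. s \<in> {0..1} \<Longrightarrow> H e s 0 \<le> H e sM 0"
    using continuous_attains_sup[OF compact_Icc _ cont_s[of 0]] by force
  have "periodic_visc_subsol H e (H e sM 0) (\<lambda>_. 0)"
    unfolding periodic_visc_subsol_def
  proof (intro conjI ballI allI impI)
    show "continuous_on {0..1} (\<lambda>_::real. 0::real)" by simp
    show "(0::real) = 0" by simp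
    fix s' \<phi> \<phi>' assume s': "s' \<in> {0<..<1}" and H: "(\<forall>x. (\<phi> has_real_derivative \<phi>' x) (at x)) \<and>
      continuous_on UNIV \<phi>' \<and> \<phi> s' = 0 \<and> (\<exists>\<delta>>0. \<forall>x\<in>{0<..<1}. \<bar>x - s'\<bar> < \<delta> \<longrightarrow> (0::real) \<le> \<phi> x)"
    show "H e s' (\<phi>' s') \<le> H e sM 0"
      apply (rule const_subsol[of "H e sM 0" s' \<phi> \<phi>'])
      using sM H s' by auto
  qed
  then have ne: "Bs \<noteq> {}" unfolding Bs_def by blast
  have lb: "H e s p0 \<le> b" if bB: "b \<in> Bs" for b
  proof -
    obtain u where u: "periodic_visc_subsol H e b u" using bB Bs_def by blast
    have "\<exists>p. H e s p \<le> b"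
      apply (rule visc[OF _ _ s, of u])
      using u unfolding periodic_visc_subsol_def by blast+
    then show ?thesis using p0 by (meson order.trans)
  qed
  have "H e s p0 \<le> Inf Bs" by (rule cInf_greatest[OF ne lb])
  then show ?thesis unfolding c_gamma_def Bs_def by blast
qed

lemma level_ok:
  assumes ns: "network_setting V E orig t neg H" and e: "e \<in> E" and b: "b \<ge> a0 E orig t H"
    and s: "s \<in> {0..1}"
  shows "\<exists>p. H e s p \<le> b"
proof -
  have hm: "ham (H e)" by (rule ns_ham[OF ns e])
  have fin: "finite E" using ns unfolding network_setting_def by blast
  define F where "F = a_gamma H ` {e\<in>E. orig e \<noteq> t e} \<union> c_gamma H ` {e\<in>E. orig e = t e}"
  have fF: "finite F" unfolding F_def using fin by simp
  have a0F: "a0 E orig t H = Max F" unfolding a0_def F_def by simp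
  show ?thesis
  proof (cases "orig e = t e")
    case True
    then have "c_gamma H e \<in> F" unfolding F_def using e by blast
    then have "c_gamma H e \<le> b" using Max_ge[OF fF] a0F b by fastforce
    then show ?thesis using cg_ok[of H e s, OF hm s] by (meson order.trans)
  next
    case False
    then have "a_gamma H e \<in> F" unfolding F_def using e by blast
    then have "a_gamma H e \<le> b" using Max_ge[OF fF] a0F b by fastforce
    moreover have "\<exists>p. H e s p \<le> a_gamma H e"
      unfolding a_gamma_def using ham.ag_ok[OF hm s] by simp
    ultimately show ?thesis by (meson order.trans)
  qed
qed


lemma exists_subsol_level:
  assumes ns: "network_setting V E orig t neg H"
  shows "\<exists>c0. c0 \<ge> a0 E orig t H \<and> (\<exists>v. dfe_subsol E orig t H c0 v)"
proof -
  have fin: "finite E" using ns unfolding network_setting_def by blast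
  have "\<forall>e\<in>E. \<exists>B. \<forall>s\<in>{0..1}. H e s 0 \<le> B"
  proof
    fix e assume e: "e \<in> E"
    interpret ham "H e" by (rule ns_ham[OF ns e])
    obtain sM where sM: "sM \<in> {0..1}" "\<And>s. s \<in> {0..1} \<Longrightarrow> H e s 0 \<le> H e sM 0"
      using continuous_attains_sup[OF compact_Icc _ cont_s[of 0]] by force
    then show "\<exists>B. \<forall>s\<in>{0..1}. H e s 0 \<le> B" by blast
  qed
  then obtain Bf where Bf: "\<And>e s. e \<in> E \<Longrightarrow> s \<in> {0..1} \<Longrightarrow> H e s 0 \<le> Bf e" by metis
  define c0 where "c0 = max (a0 E orig t H) (Max (insert 0 (Bf ` E)))"
  have c0B: "H e s 0 \<le> c0" if "e \<in> E" "s \<in> {0..1}" for e s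
  proof -
    have "Bf e \<le> Max (insert 0 (Bf ` E))" using fin that(1) by (simp add: Max_ge)
    then show ?thesis using Bf[OF that] unfolding c0_def by linarith
  qed
  have "dfe_subsol E orig t H c0 (\<lambda>_. 0)"
    unfolding dfe_subsol_def
  proof
    fix e assume e: "e \<in> E"
    interpret ham "H e" by (rule ns_ham[OF ns e])
    have ex: "\<forall>s\<in>{0..1}. \<exists>p. H e s p \<le> c0" using c0B e by blast
    have "0 \<le> integral {0..1} (rr (H e) c0)"
      apply (rule integral_nonneg[OF rr_int[OF ex]])
      using rr_props(2) ex c0B e by blast
    then show "(0::real) - 0 \<le> sigma H c0 e" by (simp add: sigma_rr)
  qed
  moreover have "c0 \<ge> a0 E orig t H" unfolding c0_def by simp
  ultimately show ?thesis by blast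
qed

lemma one_side:
  fixes V :: "'v set" and E :: "'e set" and orig t :: "'e \<Rightarrow> 'v" and neg :: "'e \<Rightarrow> 'e"
    and H :: "'e \<Rightarrow> real \<Rightarrow> real \<Rightarrow> real" and a :: real
    and V' :: "'v set" and u v w :: "'v \<Rightarrow> real"
  assumes ns: "network_setting V E orig t neg H"
    and ac: "a > crit_value E orig t H"
    and "V' \<subseteq> V"
    and sv: "\<forall>x\<in>V - V'. dfe_solves_at E orig t neg H a v x"
    and bv: "\<forall>x\<in>V'. v x = u x"
    and sw: "\<forall>x\<in>V - V'. dfe_solves_at E orig t neg H a w x"
    and bw: "\<forall>x\<in>V'. w x = u x"
  shows "\<forall>x\<in>V. v x \<le> w x"
proof (rule ccontr)
  assume "\<not> (\<forall>x\<in>V. v x \<le> w x)"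
  then obtain x0 where x0: "x0 \<in> V" "v x0 > w x0" by force
  have finV: "finite V" and finE: "finite E" using ns unfolding network_setting_def by blast+
  have edge: "\<And>e. e \<in> E \<Longrightarrow> orig e \<in> V \<and> t e \<in> V \<and> neg e \<in> E \<and> neg (neg e) = e \<and> orig (neg e) = t e"
    using ns unfolding network_setting_def by blast
  define S where "S = {a. a \<ge> a0 E orig t H \<and> (\<exists>v. dfe_subsol E orig t H a v)}"
  have Sne: "S \<noteq> {}" using exists_subsol_level[OF ns] unfolding S_def by blast
  obtain b where b: "b \<in> S" "b < a"
    using cInf_lessD[OF Sne] ac unfolding crit_value_def S_def by blast
  obtain \<phi> where \<phi>: "dfe_subsol E orig t H b \<phi>" and ba0: "b \<ge> a0 E orig t H" using b(1) S_def by blast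
  have gap: "sigma H b e < sigma H a e" if "e \<in> E" for e
  proof -
    interpret ham "H e" by (rule ns_ham[OF ns that])
    have ex: "\<forall>s\<in>{0..1}. \<exists>p. H e s p \<le> b" using level_ok[OF ns that ba0] by blast
    show ?thesis unfolding sigma_rr by (rule integral_gap[OF ex b(2)])
  qed
  define M where "M = Max ((\<lambda>x. v x - w x) ` V)"
  have Mge: "\<And>x. x \<in> V \<Longrightarrow> v x - w x \<le> M" unfolding M_def using finV by simp
  have "M \<in> (\<lambda>x. v x - w x) ` V" unfolding M_def using finV x0(1) by (intro Max_in) auto
  then obtain xm where xm: "xm \<in> V" "v xm - w xm = M" by auto
  have Mpos: "M > 0" using Mge[OF x0(1)] x0(2) by simp
  define A where "A = {x\<in>V. v x - w x = M}"
  have Ane: "A \<noteq> {}" using xm A_def by blast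
  have finA: "finite A" using finV A_def by simp
  define D where "D x = w x - \<phi> x" for x
  have step: "\<exists>y\<in>A. D y < D x" if xA: "x \<in> A" for x
  proof -
    have xV: "x \<in> V" and xM: "v x - w x = M" using xA A_def by auto
    have xV': "x \<notin> V'" using xM Mpos bv bw by force
    have solv: "v x = Min ((\<lambda>e. v (t e) + sigma H a (neg e)) ` {e\<in>E. orig e = x})"
      using sv xV xV' unfolding dfe_solves_at_def by blast
    have solw: "w x = Min ((\<lambda>e. w (t e) + sigma H a (neg e)) ` {e\<in>E. orig e = x})"
      using sw xV xV' unfolding dfe_solves_at_def by blast
    have Exne: "{e\<in>E. orig e = x} \<noteq> {}"
    proof
      assume emp: "{e\<in>E. orig e = x} = {}"
      have "v x = Min ((\<lambda>e. v (t e) + sigma H a (neg e)) ` {})" using solv by (simp only: emp)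
      moreover have "w x = Min ((\<lambda>e. w (t e) + sigma H a (neg e)) ` {})" using solw by (simp only: emp)
      ultimately have "v x = w x" by simp
      then show False using xM Mpos by simp
    qed
    have finEx: "finite {e\<in>E. orig e = x}" using finE by simp
    have "w x \<in> (\<lambda>e. w (t e) + sigma H a (neg e)) ` {e\<in>E. orig e = x}"
      unfolding solw by (rule Min_in) (use finEx Exne in auto)
    then obtain e where e: "e \<in> E" "orig e = x" "w x = w (t e) + sigma H a (neg e)" by auto
    have "v x \<le> v (t e) + sigma H a (neg e)"
      unfolding solv by (rule Min_le) (use finEx e in auto)
    then have "v (t e) - w (t e) \<ge> M" using e(3) xM by simp
    moreover have teV: "t e \<in> V" using edge[OF e(1)] by blast
    ultimately have teA: "t e \<in> A" using Mge[OF teV] A_def by force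
    have ne: "neg e \<in> E" and tne: "t (neg e) = orig e" and one: "orig (neg e) = t e"
    proof -
      show ne: "neg e \<in> E" using edge[OF e(1)] by blast
      have "orig (neg (neg e)) = t (neg e)" using edge[OF ne] by blast
      then show "t (neg e) = orig e" using edge[OF e(1)] by simp
      show "orig (neg e) = t e" using edge[OF e(1)] by blast
    qed
    have "\<phi> (t (neg e)) - \<phi> (orig (neg e)) \<le> sigma H b (neg e)" using \<phi> ne unfolding dfe_subsol_def by blast
    then have "\<phi> x - \<phi> (t e) < sigma H a (neg e)" using gap[OF ne] tne one e(2) by simp
    then have "D (t e) < D x" unfolding D_def using e(3) by simp
    then show ?thesis using teA by blast
  qed
  have "Min (D ` A) \<in> D ` A" using finA Ane by (intro Min_in) auto
  then obtain xmin where xmin: "xmin \<in> A" "D xmin = Min (D ` A)" by auto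
  obtain y where y: "y \<in> A" "D y < D xmin" using step[OF xmin(1)] by blast
  have "Min (D ` A) \<le> D y" using finA y(1) by simp
  then show False using y xmin by simp
qed

theorem proposition6p6:
  fixes V :: "'v set" and E :: "'e set" and orig t :: "'e \<Rightarrow> 'v" and neg :: "'e \<Rightarrow> 'e"
    and H :: "'e \<Rightarrow> real \<Rightarrow> real \<Rightarrow> real" and a :: real
    and V' :: "'v set" and u v w :: "'v \<Rightarrow> real"
  assumes "network_setting V E orig t neg H"
    and "a > crit_value E orig t H"
    and "V' \<subseteq> V"
    and "\<forall>x\<in>V - V'. dfe_solves_at E orig t neg H a v x"
    and "\<forall>x\<in>V'. v x = u x"
    and "\<forall>x\<in>V - V'. dfe_solves_at E orig t neg H a w x"
    and "\<forall>x\<in>V'. w x = u x"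
  shows "\<forall>x\<in>V. v x = w x"
proof -
  have "\<forall>x\<in>V. v x \<le> w x" by (rule one_side[OF assms])
  moreover have "\<forall>x\<in>V. w x \<le> v x" by (rule one_side[OF assms(1,2,3,6,7,4,5)])
  ultimately show ?thesis by (meson antisym)
qed


end
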